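(* Let $q=2^f\geq 4$ and $I=\{0,\ f,\ 2f/\gcd(3,f),\ 4f/\gcd(3,f)\}$. Let $b\in\mathbb{F}_{q^2}^\times$ with $b+b^q=1$ and $b^{q+1}\neq 1$, and let $a\in\mathbb{F}_{q^2}^\times$ have order $q+1$ and satisfy: $(1+b+b^2)^{2^i}\neq a+a^{-1}+1$ for all $i\in I$; $(1+b+b^2)^{2^i}\neq a(1+b+b^3+b^4)+a^{-1}(b^2+b^3+b^4)$ for all $i\in I$; $a+a^{-1}+1\neq a(1+b+b^3+b^4)+a^{-1}(b^2+b^3+b^4)$; and $a+a^{-1}+1\neq 0$. Let \[ X=\begin{pmatrix}b&1&1\\ b^q&0&1\\ b^{q+1}&b&b^q\end{pmatrix},\quad Y=\begin{pmatrix}ab+a^{-1}b^q&0&a(b+b^{q+1})+a^{-1}(b^q+b^{q+1})\\ 0&1&0\\ a+a^{-1}&0&ab+a^{-1}b^q\end{pmatrix},\quad Z=\begin{pmatrix}1&0&1\\ 0&1&0\\ 0&0&1\end{pmatrix}, \] which lie in $\mathrm{SU}_3(q)$, and let $x,y,z$ be their images under the natural projection $\eta:\mathrm{SU}_3(q)\to\mathrm{PSU}_3(q)$. Then $x,y,z$ each have order $2$, and $zy$ has order $q+1$.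
   Context: Here $\mathrm{SU}_3(q)=\{A\in\mathrm{SL}_3(q^2): \overline{A}^{T}WA=W\}$, where $\overline{(a_{ij})}=(a_{ij}^q)$ and $W=\begin{pmatrix}0&0&1\\0&1&0\\1&0&0\end{pmatrix}$, and $\mathrm{PSU}_3(q)=\mathrm{SU}_3(q)/Z(\mathrm{SU}_3(q))$. *)

theory Defs
  imports "HOL-Analysis.Analysis" "HOL-Algebra.Multiplicative_Group"
begin

text \<open>Matrices over a field F_{q^2} are elements of 'a^3^3; A$i$j is the entry in row i, column j.\<close>

definition conjm :: "nat \<Rightarrow> 'a::field^3^3 \<Rightarrow> 'a^3^3" where
  "conjm q A = (\<chi> i j. (A$i$j) ^ q)"

definition Wmat :: "'a::field^3^3" where
  "Wmat = vector [vector [0,0,1], vector [0,1,0], vector [1,0,0]]"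

text \<open>SU_3(q) inside SL_3(q^2) (the field type is F_{q^2}).\<close>
definition SU3 :: "nat \<Rightarrow> ('a::field^3^3) set" where
  "SU3 q = {A. det A = 1 \<and> transpose (conjm q A) ** Wmat ** A = Wmat}"

definition SU_grp :: "nat \<Rightarrow> ('a::field^3^3) monoid" where
  "SU_grp q = \<lparr>carrier = SU3 q, mult = (**), one = mat 1\<rparr>"

definition grp_center :: "('b, 'c) monoid_scheme \<Rightarrow> 'b set" where
  "grp_center G = {z \<in> carrier G. \<forall>g \<in> carrier G. z \<otimes>\<^bsub>G\<^esub> g = g \<otimes>\<^bsub>G\<^esub> z}"

definition PSU :: "nat \<Rightarrow> ('a::field^3^3) set monoid" where
  "PSU q = SU_grp q Mod grp_center (SU_grp q)"

definition eta :: "nat \<Rightarrow> 'a::field^3^3 \<Rightarrow> ('a^3^3) set" where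
  "eta q A = grp_center (SU_grp q) #>\<^bsub>SU_grp q\<^esub> A"

definition mult_order :: "'a::field \<Rightarrow> nat" where
  "mult_order a = (LEAST n. 0 < n \<and> a ^ n = 1)"

end

theory Submission
  imports Defs
begin

lemma fin_field_pow:
  fixes x :: "'a::{field,finite}"
  assumes "x \<noteq> 0"
  shows "x ^ (CARD('a) - 1) = 1"
proof -
  let ?S = "UNIV - {0::'a}"
  have bij: "bij_betw (\<lambda>y. x*y) ?S ?S"
  proof (rule bij_betwI[where g="\<lambda>y. inverse x * y"])
  qed (use assms in \<open>auto simp: field_simps\<close>)
  have "prod (\<lambda>y. x*y) ?S = prod id ?S"
    using prod.reindex_bij_betw[OF bij, of id] by simp
  moreover have "prod (\<lambda>y. x*y) ?S = x ^ card ?S * prod id ?S"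
    by (simp add: prod.distrib)
  moreover have "prod id ?S \<noteq> 0" by simp
  moreover have "card ?S = CARD('a) - 1" by (simp add: card_Diff_singleton)
  ultimately show ?thesis by simp
qed

lemma char2:
  assumes "CARD('a::{field,finite}) = 2 ^ k" "k \<ge> 1"
  shows "(2::'a) = 0"
proof -
  have "(-1::'a) ^ (CARD('a) - 1) = 1" by (rule fin_field_pow) simp
  moreover have "odd (CARD('a) - 1)" using assms by simp
  ultimately have "(-1::'a) = 1" by simp
  then have "(-1::'a) + 1 = 1 + 1" by simp
  then show ?thesis by simp
qed

lemma frob_add:
  assumes "(2::'a::comm_ring_1) = 0"
  shows "((x::'a) + y) ^ (2 ^ f) = x ^ (2 ^ f) + y ^ (2 ^ f)"
proof (induction f)
  case (Suc f)
  have "(x + y) ^ (2 ^ Suc f) = ((x + y) ^ (2 ^ f)) ^ 2" by (simp add: power_mult[symmetric] mult.commute)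
  also have "\<dots> = (x ^ (2 ^ f) + y ^ (2 ^ f)) ^ 2" using Suc by simp
  also have "\<dots> = (x ^ (2 ^ f))^2 + (y ^ (2 ^ f))^2" by (simp add: power2_sum assms)
  also have "\<dots> = x ^ (2 ^ Suc f) + y ^ (2 ^ Suc f)" by (simp add: power_mult[symmetric] mult.commute)
  finally show ?case .
qed simp



lemma conjm_mult:
  assumes "(2::'a::field) = 0" "q = 2^f"
  shows "conjm q ((A::'a^3^3) ** B) = conjm q A ** conjm q B"
  unfolding conjm_def matrix_matrix_mult_def
  by (simp add: sum_3 assms(2) frob_add[OF assms(1)] power_mult_distrib vec_eq_iff)

lemma conjm_one:
  assumes "q > 0"
  shows "conjm q (mat 1 :: 'a::field^3^3) = mat 1"
  unfolding conjm_def mat_def using assms by (simp add: vec_eq_iff)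

lemma WW: "(Wmat::'a::field^3^3) ** Wmat = mat 1"
  unfolding Wmat_def matrix_matrix_mult_def mat_def
  by (simp add: vec_eq_iff forall_3 sum_3)

lemma SU_group:
  assumes two: "(2::'a::field) = 0" and q: "q = 2^f"
  shows "group (SU_grp q :: ('a^3^3) monoid)"
proof (rule groupI)
  have q0: "q > 0" using q by simp
  fix x y :: "'a^3^3"
  assume x: "x \<in> carrier (SU_grp q)"
  then have dx: "det x = 1" and ux: "transpose (conjm q x) ** Wmat ** x = Wmat"
    by (auto simp: SU_grp_def SU3_def)
  {
    assume y: "y \<in> carrier (SU_grp q)"
    then have dy: "det y = 1" and uy: "transpose (conjm q y) ** Wmat ** y = Wmat"
      by (auto simp: SU_grp_def SU3_def)
    have "transpose (conjm q (x ** y)) ** Wmat ** (x ** y)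
        = transpose (conjm q y) ** (transpose (conjm q x) ** Wmat ** x) ** y"
      by (simp add: conjm_mult[OF two q] matrix_transpose_mul matrix_mul_assoc)
    also have "\<dots> = Wmat" using ux uy by simp
    finally show "x \<otimes>\<^bsub>SU_grp q\<^esub> y \<in> carrier (SU_grp q)"
      using dx dy by (simp add: SU_grp_def SU3_def det_mul)
  }
  show "\<one>\<^bsub>SU_grp q\<^esub> \<otimes>\<^bsub>SU_grp q\<^esub> x = x" by (simp add: SU_grp_def)
  define y where "y = Wmat ** transpose (conjm q x) ** Wmat"
  have yx: "y ** x = mat 1"
    unfolding y_def using ux by (metis WW matrix_mul_assoc)
  then have xy: "x ** y = mat 1" using matrix_left_right_inverse by blast
  have dy: "det y = 1" using dx yx by (metis det_I det_mul mult.right_neutral)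
  have "transpose (conjm q y) ** Wmat ** y
       = transpose (conjm q y) ** (transpose (conjm q x) ** Wmat ** x) ** y"
    using ux by simp
  also have "\<dots> = transpose (conjm q (x ** y)) ** Wmat ** (x ** y)"
    by (simp add: conjm_mult[OF two q] matrix_transpose_mul matrix_mul_assoc)
  also have "\<dots> = Wmat" using xy q0 by (simp add: conjm_one)
  finally have "y \<in> carrier (SU_grp q)" using dy by (simp add: SU_grp_def SU3_def)
  then show "\<exists>y\<in>carrier (SU_grp q). y \<otimes>\<^bsub>SU_grp q\<^esub> x = \<one>\<^bsub>SU_grp q\<^esub>"
    using yx by (auto simp: SU_grp_def)
next
  have q0: "q > 0" using q by simp
  show "\<one>\<^bsub>SU_grp q\<^esub> \<in> carrier (SU_grp q)"
    using q0 by (simp add: SU_grp_def SU3_def conjm_one)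
next
  fix x y z :: "'a^3^3"
  show "x \<otimes>\<^bsub>SU_grp q\<^esub> y \<otimes>\<^bsub>SU_grp q\<^esub> z = x \<otimes>\<^bsub>SU_grp q\<^esub> (y \<otimes>\<^bsub>SU_grp q\<^esub> z)"
    by (simp add: SU_grp_def matrix_mul_assoc)
qed

lemma center_normal:
  fixes G (structure)
  assumes "group G"
  shows "normal (grp_center G) G"
proof -
  interpret group G by fact
  have sg: "subgroup (grp_center G) G"
  proof (rule subgroupI)
    show "grp_center G \<subseteq> carrier G" by (auto simp: grp_center_def)
    show "grp_center G \<noteq> {}" using one_closed by (auto simp: grp_center_def)
  next
    fix a assume a: "a \<in> grp_center G"
    then have ac: "a \<in> carrier G" and com: "\<forall>g\<in>carrier G. a \<otimes> g = g \<otimes> a"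
      by (auto simp: grp_center_def)
    have "\<forall>g\<in>carrier G. inv a \<otimes> g = g \<otimes> inv a"
    proof
      fix g assume g: "g \<in> carrier G"
      have e1: "a \<otimes> (inv a \<otimes> g) = g" using g ac by (simp add: m_assoc[symmetric])
      have "a \<otimes> (g \<otimes> inv a) = (a \<otimes> g) \<otimes> inv a" using g ac by (simp add: m_assoc)
      also have "\<dots> = (g \<otimes> a) \<otimes> inv a" using com g by simp
      also have "\<dots> = g" using g ac by (simp add: m_assoc)
      finally have "a \<otimes> (inv a \<otimes> g) = a \<otimes> (g \<otimes> inv a)" using e1 by simp
      then show "inv a \<otimes> g = g \<otimes> inv a" using ac g by simp
    qed
    then show "inv a \<in> grp_center G" using ac by (simp add: grp_center_def)
  next
    fix a b assume "a \<in> grp_center G" "b \<in> grp_center G"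
    then have a: "a \<in> carrier G" and b: "b \<in> carrier G"
      and ca: "\<forall>g\<in>carrier G. a \<otimes> g = g \<otimes> a" and cb: "\<forall>g\<in>carrier G. b \<otimes> g = g \<otimes> b"
      by (auto simp: grp_center_def)
    have "\<forall>g\<in>carrier G. a \<otimes> b \<otimes> g = g \<otimes> (a \<otimes> b)"
    proof
      fix g assume g: "g \<in> carrier G"
      have "a \<otimes> b \<otimes> g = a \<otimes> (b \<otimes> g)" using a b g by (simp add: m_assoc)
      also have "\<dots> = a \<otimes> (g \<otimes> b)" using cb g by simp
      also have "\<dots> = (a \<otimes> g) \<otimes> b" using a b g by (simp add: m_assoc)
      also have "\<dots> = (g \<otimes> a) \<otimes> b" using ca g by simp
      also have "\<dots> = g \<otimes> (a \<otimes> b)" using a b g by (simp add: m_assoc)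
      finally show "a \<otimes> b \<otimes> g = g \<otimes> (a \<otimes> b)" .
    qed
    then show "a \<otimes> b \<in> grp_center G" using a b by (simp add: grp_center_def)
  qed
  show ?thesis
  proof (subst normal_inv_iff, intro conjI sg ballI)
    fix x h assume x: "x \<in> carrier G" and h: "h \<in> grp_center G"
    then have e: "x \<otimes> h = h \<otimes> x" and hc: "h \<in> carrier G" by (auto simp: grp_center_def)
    have "x \<otimes> h \<otimes> inv x = h" using x hc by (simp add: e m_assoc)
    then show "x \<otimes> h \<otimes> inv x \<in> grp_center G" using h by simp
  qed
qed

lemma quot_pow_one:
  assumes G: "group G" and x: "x \<in> carrier G"
  shows "(grp_center G #>\<^bsub>G\<^esub> x) [^]\<^bsub>G Mod grp_center G\<^esub> (n::nat) = \<one>\<^bsub>G Mod grp_center G\<^esub>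
     \<longleftrightarrow> x [^]\<^bsub>G\<^esub> n \<in> grp_center G"
proof -
  interpret normal "grp_center G" G using center_normal[OF G] .
  have y: "x [^]\<^bsub>G\<^esub> n \<in> carrier G" using x by simp
  show ?thesis
    using rcos_self[OF y subgroup_axioms] rcos_const[OF G]
    by (auto simp: FactGroup_pow[OF x])
qed

lemma quot_ord_2:
  assumes G: "group G" and x: "x \<in> carrier G"
    and x2: "x \<otimes>\<^bsub>G\<^esub> x \<in> grp_center G" and xn: "x \<notin> grp_center G"
  shows "group.ord (G Mod grp_center G) (grp_center G #>\<^bsub>G\<^esub> x) = 2"
proof -
  interpret normal "grp_center G" G using center_normal[OF G] .
  interpret Q: group "G Mod grp_center G" by (rule factorgroup_is_group)
  have xc: "grp_center G #>\<^bsub>G\<^esub> x \<in> carrier (G Mod grp_center G)"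
    using x by (simp add: FactGroup_def RCOSETS_def) blast
  have "x [^]\<^bsub>G\<^esub> (2::nat) \<in> grp_center G" using x2 x by (simp add: numeral_2_eq_2)
  then have d2: "Q.ord (grp_center G #>\<^bsub>G\<^esub> x) dvd 2"
    using quot_pow_one[OF G x] Q.pow_eq_id[OF xc] by blast
  have "x [^]\<^bsub>G\<^esub> (1::nat) \<notin> grp_center G" using xn x by simp
  then have "\<not> Q.ord (grp_center G #>\<^bsub>G\<^esub> x) dvd 1"
    using quot_pow_one[OF G x] Q.pow_eq_id[OF xc] by blast
  then show ?thesis using d2
    by (metis dvd_refl nat_dvd_1_iff_1 two_is_prime_nat prime_nat_iff)
qed

lemma quot_ord_gen:
  assumes G: "group G" and x: "x \<in> carrier G"
    and xm: "x [^]\<^bsub>G\<^esub> m \<in> grp_center G"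
    and xn: "\<And>n. x [^]\<^bsub>G\<^esub> (n::nat) \<in> grp_center G \<Longrightarrow> m dvd n"
  shows "group.ord (G Mod grp_center G) (grp_center G #>\<^bsub>G\<^esub> x) = m"
proof -
  interpret normal "grp_center G" G using center_normal[OF G] .
  interpret Q: group "G Mod grp_center G" by (rule factorgroup_is_group)
  have xc: "grp_center G #>\<^bsub>G\<^esub> x \<in> carrier (G Mod grp_center G)"
    using x by (simp add: FactGroup_def RCOSETS_def) blast
  have "x [^]\<^bsub>G\<^esub> (Q.ord (grp_center G #>\<^bsub>G\<^esub> x)) \<in> grp_center G"
    using quot_pow_one[OF G x] Q.pow_ord_eq_1[OF xc] by blast
  then have 1: "m dvd Q.ord (grp_center G #>\<^bsub>G\<^esub> x)" by (rule xn)
  have 2: "Q.ord (grp_center G #>\<^bsub>G\<^esub> x) dvd m"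
    using quot_pow_one[OF G x] Q.pow_eq_id[OF xc] xm by blast
  show ?thesis using 1 2 by (rule dvd_antisym[rotated])
qed



lemma conjm_vec:
  "conjm q (vector [vector [x11,x12,x13], vector [x21,x22,x23], vector [x31,x32,x33]] :: 'a::field^3^3)
   = vector [vector [x11^q,x12^q,x13^q], vector [x21^q,x22^q,x23^q], vector [x31^q,x32^q,x33^q]]"
  unfolding conjm_def by (simp add: vec_eq_iff forall_3)

definition mpow :: "'a::field^3^3 \<Rightarrow> nat \<Rightarrow> 'a^3^3" where
  "mpow N n = ((\<lambda>M. M ** N) ^^ n) (mat 1)"

lemma mpow_Suc: "mpow N (Suc n) = mpow N n ** N"
  by (simp add: mpow_def)

lemma SU_pow: "x [^]\<^bsub>SU_grp q\<^esub> (n::nat) = mpow x n"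
  by (induction n) (simp_all add: SU_grp_def mpow_def)

lemma aux:
  fixes p r c k x y :: "'a::comm_ring_1"
  assumes h: "p*r - c*k = 1"
  shows "(x*p - y)*p + x*c*k = ((p+r)*x - y)*p - x"
    and "(x*p - y)*c + x*c*r = ((p+r)*x - y)*c"
    and "x*k*p + (x*r - y)*k = ((p+r)*x - y)*k"
    and "x*k*c + (x*r - y)*r = ((p+r)*x - y)*r - x"
proof -
  have ck: "c*k = p*r - 1" using h by (simp add: algebra_simps)
  have e: "x*c*k = x*(p*r) - x" by (simp add: mult.assoc ck right_diff_distrib)
  show "(x*p - y)*p + x*c*k = ((p+r)*x - y)*p - x" unfolding e by (simp add: algebra_simps)
  show "(x*p - y)*c + x*c*r = ((p+r)*x - y)*c" by (simp add: algebra_simps)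
  show "x*k*p + (x*r - y)*k = ((p+r)*x - y)*k" by (simp add: algebra_simps)
  have e2: "x*k*c = x*(p*r) - x" using e by (simp add: ac_simps)
  show "x*k*c + (x*r - y)*r = ((p+r)*x - y)*r - x" unfolding e2 by (simp add: algebra_simps)
qed
lemma pow_form:
  fixes N :: "'a::field^3^3" and s :: "nat \<Rightarrow> 'a"
  assumes e: "N$1$2 = 0" "N$2$1 = 0" "N$2$2 = 1" "N$2$3 = 0" "N$3$2 = 0"
    and d: "N$1$1 * N$3$3 - N$1$3 * N$3$1 = 1"
    and s0: "s 0 = 0" and s1: "s 1 = 1"
    and sr: "\<And>n. s (n+2) = (N$1$1 + N$3$3) * s (n+1) - s n"
  shows "mpow N (Suc n) = vector [vector [s (n+1) * N$1$1 - s n, 0, s (n+1) * N$1$3],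
                                  vector [0, 1, 0],
                                  vector [s (n+1) * N$3$1, 0, s (n+1) * N$3$3 - s n]]"
proof (induction n)
  case 0
  have "mpow N (Suc 0) = N" by (simp add: mpow_def)
  then show ?case unfolding vec_eq_iff forall_3 using e s0 s1 by simp
next
  case (Suc n)
  have r: "s (Suc (Suc n)) = (N$1$1 + N$3$3) * s (Suc n) - s n" using sr[of n] by simp
  show ?case
    unfolding mpow_Suc[of N "Suc n"] Suc
    apply (simp add: matrix_matrix_mult_def vec_eq_iff forall_3 sum_3 e r)
    by (intro conjI aux[OF d])
qed



lemma c2_add:
  assumes two: "(2::'a::comm_ring_1) = 0"
  shows "\<And>x::'a. x + x = 0" "\<And>x y::'a. x + (x + y) = y" "\<And>x::'a. - x = x"
    "(3::'a) = 1" "(4::'a) = 0" "\<And>x y::'a. x - y = x + y"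
    "\<And>n. (numeral (Num.Bit0 n) :: 'a) = 0" "\<And>n. (numeral (Num.Bit1 n) :: 'a) = 1"
proof -
  have XX: "\<And>z::'a. z + z = 0" using two by (metis mult_2 mult_zero_left)
  fix x y :: 'a
  show xx: "x + x = 0" using two by (metis mult_2 mult_zero_left)
  show "x + (x + y) = y" by (simp add: add.assoc[symmetric] xx)
  show nx: "- x = x" using xx by (simp add: add_eq_0_iff2)
  show "x - y = x + y" using two by (metis add_eq_0_iff2 diff_conv_add_uminus mult_2 mult_zero_left)
  show "(3::'a) = 1" using two by (metis add_0 numeral_Bit1 numeral_One one_add_one)
  show "(4::'a) = 0" using two by (metis mult_2 mult_zero_left numeral_Bit0 one_add_one)
  fix n
  show b0: "(numeral (Num.Bit0 n) :: 'a) = 0" by (simp only: numeral_Bit0 XX)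
  show "(numeral (Num.Bit1 n) :: 'a) = 1" by (simp only: numeral_Bit1 XX add_0)
qed

lemma testX:
  fixes b :: "'a::field"
  assumes two: "(2::'a) = 0" and q: "q = 2^f" and q0: "q > 0" and bq: "b^q = 1 + b"
  shows "transpose (conjm q (vector[vector[b,1,1], vector[1+b,0,1], vector[b+b*b, b, 1+b]])) ** Wmat
     ** (vector[vector[b,1,1], vector[1+b,0,1], vector[b+b*b, b, 1+b]] :: 'a^3^3) = Wmat"
proof -
  have frob: "\<And>x y::'a. (x+y)^q = x^q + y^q" using frob_add[OF two] q by simp
  show ?thesis
    unfolding conjm_vec
    apply (simp add: frob power_mult_distrib bq q0 zero_power[OF q0])
    apply (simp add: Wmat_def matrix_matrix_mult_def transpose_def vec_eq_iff forall_3 sum_3)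
    apply (simp add: algebra_simps c2_add[OF two] two)
    done
qed


lemma testY:
  fixes a b :: "'a::field"
  assumes two: "(2::'a) = 0" and q: "q = 2^f" and q0: "q > 0" and bq: "b^q = 1 + b"
    and a0: "a \<noteq> 0" and aq: "a^q = inverse a" and aiq: "(inverse a)^q = a"
  defines "Y \<equiv> vector [vector [a * b + inverse a * (1+b), 0,
                                 a * (b + (b+b*b)) + inverse a * ((1+b) + (b+b*b))],
                         vector [0, 1, 0],
                         vector [a + inverse a, 0, a * b + inverse a * (1+b)]] :: 'a^3^3"
  shows "transpose (conjm q Y) ** Wmat ** Y = Wmat" "det Y = 1" "Y ** Y = mat 1"
proof -
  have frob: "\<And>x y::'a. (x+y)^q = x^q + y^q" using frob_add[OF two] q by simp
  show "transpose (conjm q Y) ** Wmat ** Y = Wmat"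
    unfolding Y_def conjm_vec
    apply (simp add: frob power_mult_distrib bq q0 zero_power[OF q0] aq aiq)
    apply (simp add: Wmat_def matrix_matrix_mult_def transpose_def vec_eq_iff forall_3 sum_3)
    apply (simp add: field_simps a0)
    apply (simp add: algebra_simps c2_add[OF two] two zero_power[OF q0])
    done
  show "det Y = 1"
    unfolding Y_def det_3
    apply (simp add: field_simps a0)
    apply (simp add: algebra_simps c2_add[OF two] two zero_power[OF q0])
    done
  show "Y ** Y = mat 1"
    unfolding Y_def
    apply (simp add: mat_def matrix_matrix_mult_def vec_eq_iff forall_3 sum_3)
    apply (simp add: field_simps a0)
    apply (simp add: algebra_simps c2_add[OF two] two zero_power[OF q0])
    done
qed

lemma testX2:
  fixes b :: "'a::field"
  assumes two: "(2::'a) = 0"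
  defines "X \<equiv> vector[vector[b,1,1], vector[1+b,0,1], vector[b+b*b, b, 1+b]] :: 'a^3^3"
  shows "det X = 1" "X ** X = mat 1"
proof -
  show "det X = 1"
    unfolding X_def det_3
    apply (simp add: algebra_simps c2_add[OF two] two)
    done
  show "X ** X = mat 1"
    unfolding X_def
    apply (simp add: mat_def matrix_matrix_mult_def vec_eq_iff forall_3 sum_3)
    apply (simp add: algebra_simps c2_add[OF two] two)
    done
qed


lemma srec:
  fixes a c :: "'a::field"
  assumes ac: "a * c = 1"
  shows "(a^(n+2) - c^(n+2)) / (a - c)
     = (a + c) * ((a^(n+1) - c^(n+1)) / (a - c)) - (a^n - c^n) / (a - c)"
proof -
  have key: "a^(n+2) - c^(n+2) = (a+c)*(a^(n+1) - c^(n+1)) - (a^n - c^n)"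
  proof -
    have "(a+c)*(a^(n+1) - c^(n+1)) - (a^n - c^n)
       = a*a*a^n - c*c*c^n + ((a*c)*a^n - a^n) - ((a*c)*c^n - c^n)"
      by (simp add: algebra_simps)
    also have "\<dots> = a^(n+2) - c^(n+2)" by (simp add: ac algebra_simps)
    finally show ?thesis by simp
  qed
  have "(a^(n+2) - c^(n+2)) / (a - c) = ((a+c)*(a^(n+1) - c^(n+1)) - (a^n - c^n)) / (a - c)"
    by (simp only: key)
  also have "\<dots> = (a + c) * ((a^(n+1) - c^(n+1)) / (a - c)) - (a^n - c^n) / (a - c)"
    by (simp only: diff_divide_distrib[of "(a+c)*(a^(n+1) - c^(n+1))"] times_divide_eq_right)
  finally show ?thesis .
qed



theorem lemma3p3:
  fixes f q :: nat and a b :: "'a::{field,finite}"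
    and X Y Z :: "'a^3^3"
  assumes hq: "q = 2 ^ f" and hq4: "q \<ge> 4"
    and hcard: "CARD('a) = q ^ 2"
    and hI: "I = {0, f, 2 * f div gcd 3 f, 4 * f div gcd 3 f}"
    and hb0: "b \<noteq> 0" and hb1: "b + b ^ q = 1" and hb2: "b ^ (q + 1) \<noteq> 1"
    and ha0: "a \<noteq> 0" and haord: "mult_order a = q + 1"
    and h1: "\<forall>i\<in>I. (1 + b + b^2) ^ (2 ^ i) \<noteq> a + inverse a + 1"
    and h2: "\<forall>i\<in>I. (1 + b + b^2) ^ (2 ^ i) \<noteq>
               a * (1 + b + b^3 + b^4) + inverse a * (b^2 + b^3 + b^4)"
    and h3: "a + inverse a + 1 \<noteq> a * (1 + b + b^3 + b^4) + inverse a * (b^2 + b^3 + b^4)"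
    and h4: "a + inverse a + 1 \<noteq> 0"
    and hX: "X = vector [vector [b, 1, 1], vector [b ^ q, 0, 1], vector [b ^ (q + 1), b, b ^ q]]"
    and hY: "Y = vector [vector [a * b + inverse a * b ^ q, 0,
                                 a * (b + b ^ (q + 1)) + inverse a * (b ^ q + b ^ (q + 1))],
                         vector [0, 1, 0],
                         vector [a + inverse a, 0, a * b + inverse a * b ^ q]]"
    and hZ: "Z = vector [vector [1, 0, 1], vector [0, 1, 0], vector [0, 0, 1]]"
  shows "X \<in> SU3 q \<and> Y \<in> SU3 q \<and> Z \<in> SU3 q
         \<and> group.ord (PSU q) (eta q X) = 2
         \<and> group.ord (PSU q) (eta q Y) = 2
         \<and> group.ord (PSU q) (eta q Z) = 2
         \<and> group.ord (PSU q) (eta q Z \<otimes>\<^bsub>PSU q\<^esub> eta q Y) = q + 1"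
  proof -
  have f2: "f \<ge> 2"
  proof (rule ccontr)
    assume "\<not> f \<ge> 2"
    then have "f \<le> 1" by simp
    then have "q \<le> 2 ^ 1" unfolding hq by (rule power_increasing) simp
    then show False using hq4 by simp
  qed
  have card: "CARD('a) = 2 ^ (2 * f)" using hcard hq by (metis power_mult mult.commute)
  have two: "(2::'a) = 0" using char2[OF card] f2 by simp
  have q0: "q > 0" using hq by simp
  note C = c2_add[OF two]
  have "b ^ q = 1 - b" using hb1 by (simp add: eq_diff_eq add.commute)
  then have bq: "b ^ q = 1 + b" by (simp add: C)
  have bq1: "b ^ (q + 1) = b + b * b" by (simp add: power_add bq algebra_simps)
  have b1: "b \<noteq> 1"
  proof
    assume "b = 1"
    then have "(1::'a) + 1 = 1" using hb1 by simp
    then show False by (simp add: C)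
  qed
  have "(4::nat)^2 \<le> q^2" using hq4 by (rule power_mono) simp
  then have cardpos: "CARD('a) - 1 > 0" by (simp add: hcard)
  have ex: "\<exists>n. 0 < n \<and> a ^ n = 1" using fin_field_pow[OF ha0] cardpos by blast
  have apow: "a ^ (q + 1) = 1" using LeastI_ex[OF ex] haord unfolding mult_order_def by simp
  have amin: "q + 1 \<le> k" if "0 < k" "a ^ k = 1" for k
    using Least_le[of "\<lambda>n. 0 < n \<and> a ^ n = 1" k] that haord unfolding mult_order_def by simp
  have adiv: "(q + 1) dvd k" if ak: "a ^ k = 1" for k
  proof -
    define r where "r = k mod (q + 1)"
    have "k = (q + 1) * (k div (q + 1)) + r" unfolding r_def by (simp only: mult_div_mod_eq)
    then have "a ^ k = (a ^ (q + 1)) ^ (k div (q + 1)) * a ^ r"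
      by (metis power_add power_mult)
    then have ar: "a ^ r = 1" using ak apow by simp
    have "r < q + 1" unfolding r_def by simp
    then have "r = 0" using amin[of r] ar by (cases "r = 0") auto
    then show ?thesis unfolding r_def by auto
  qed
  have "a * a ^ q = 1" using apow by simp
  then have aq: "a ^ q = inverse a" by (rule inverse_unique[symmetric])
  have aiq: "(inverse a) ^ q = a" by (simp add: power_inverse aq)
  have a2: "a * a \<noteq> 1"
  proof
    assume "a * a = 1"
    then have "q + 1 \<le> 2" using amin[of 2] by (simp add: power2_eq_square)
    then show False using hq4 by simp
  qed
  have aia: "a * inverse a = 1" using ha0 by simp
  have apa: "a + inverse a \<noteq> 0"
  proof
    assume h: "a + inverse a = 0"
    have "a * (a + inverse a) = a * a + 1" using aia by (simp add: distrib_left)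
    then have "a * a + 1 = 0" using h by simp
    then have "a * a = 1" by (metis C(3) add.commute add_eq_0_iff2)
    then show False using a2 by simp
  qed
  have ana: "a - inverse a \<noteq> 0"
  proof
    assume "a - inverse a = 0"
    then have "a = inverse a" by simp
    then have "a * a = 1" using aia by metis
    then show False using a2 by simp
  qed
  define Y0 where "Y0 \<equiv> vector [vector [a * b + inverse a * (1+b), 0,
                                 a * (b + (b+b*b)) + inverse a * ((1+b) + (b+b*b))],
                         vector [0, 1, 0],
                         vector [a + inverse a, 0, a * b + inverse a * (1+b)]] :: 'a^3^3"
  define X0 where "X0 \<equiv> vector[vector[b,1,1], vector[1+b,0,1], vector[b+b*b, b, 1+b]] :: 'a^3^3"
  define Z' where "Z' \<equiv> vector[vector[1,0,0], vector[0,1,0], vector[1,0,1]] :: 'a^3^3"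
  have X': "X = X0" unfolding hX X0_def bq1 bq by (rule refl)
  have Y': "Y = Y0" unfolding hY Y0_def bq1 bq by (rule refl)
  have XSU: "X \<in> SU3 q" unfolding SU3_def X' using testX[OF two hq q0 bq] testX2[OF two]
    by (simp add: X0_def)
  have YSU: "Y \<in> SU3 q" unfolding SU3_def Y' using testY[OF two hq q0 bq ha0 aq aiq]
    by (simp add: Y0_def)
  have ZSU: "Z \<in> SU3 q" unfolding SU3_def mem_Collect_eq hZ conjm_vec
    apply (simp add: q0 zero_power[OF q0] det_3)
    apply (simp add: Wmat_def matrix_matrix_mult_def transpose_def vec_eq_iff forall_3 sum_3 C two)
    done
  have Z'SU: "Z' \<in> SU3 q" unfolding SU3_def mem_Collect_eq Z'_def conjm_vec
    apply (simp add: q0 zero_power[OF q0] det_3)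
    apply (simp add: Wmat_def matrix_matrix_mult_def transpose_def vec_eq_iff forall_3 sum_3 C two)
    done
  have XX: "X ** X = mat 1" using testX2[OF two] by (simp add: X' X0_def)
  have YY: "Y ** Y = mat 1" using testY[OF two hq q0 bq ha0 aq aiq] by (simp add: Y' Y0_def)
  have ZZ: "Z ** Z = mat 1" unfolding hZ
    by (simp add: mat_def matrix_matrix_mult_def vec_eq_iff forall_3 sum_3 C two)
  have XZ: "X ** Z \<noteq> Z ** X"
  proof
    assume "X ** Z = Z ** X"
    then have "(X ** Z)$1$1 = (Z ** X)$1$1" by simp
    then have "b = b * b" unfolding X' X0_def hZ
      by (simp add: matrix_matrix_mult_def sum_3 C algebra_simps)
    then show False using hb0 b1 by simp
  qed
  have YZ: "Y ** Z \<noteq> Z ** Y"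
  proof
    assume "Y ** Z = Z ** Y"
    then have "(Y ** Z)$3$3 = (Z ** Y)$3$3" by simp
    then have "a + inverse a = 0" unfolding Y' Y0_def hZ
      by (simp add: matrix_matrix_mult_def sum_3)
    then show False using apa by simp
  qed
  have ZZ': "Z ** Z' \<noteq> Z' ** Z"
  proof
    assume "Z ** Z' = Z' ** Z"
    then have "(Z ** Z')$1$1 = (Z' ** Z)$1$1" by simp
    then show False unfolding Z'_def hZ
      by (simp add: matrix_matrix_mult_def sum_3 C two)
  qed
  let ?G = "SU_grp q :: ('a^3^3) monoid"
  have grp: "group ?G" by (rule SU_group[OF two hq])
  have carr: "carrier ?G = SU3 q" by (simp add: SU_grp_def)
  have mult: "\<And>A B. A \<otimes>\<^bsub>?G\<^esub> B = A ** B" by (simp add: SU_grp_def)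
  have cen: "A ** B = B ** A" if "A \<in> grp_center ?G" "B \<in> SU3 q" for A B
    using that by (auto simp: grp_center_def SU_grp_def)
  have onec: "mat 1 \<in> grp_center ?G"
    using monoid.one_closed[OF group.is_monoid[OF grp]] by (simp add: grp_center_def SU_grp_def)
  have ordX: "group.ord (PSU q) (eta q X) = 2"
    unfolding PSU_def eta_def
    by (rule quot_ord_2[OF grp]) (use XSU XX onec cen[OF _ ZSU] XZ in \<open>auto simp: carr mult\<close>)
  have ordY: "group.ord (PSU q) (eta q Y) = 2"
    unfolding PSU_def eta_def
    by (rule quot_ord_2[OF grp]) (use YSU YY onec cen[OF _ ZSU] YZ in \<open>auto simp: carr mult\<close>)
  have ordZ: "group.ord (PSU q) (eta q Z) = 2"
    unfolding PSU_def eta_def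
    by (rule quot_ord_2[OF grp]) (use ZSU ZZ onec cen[OF _ Z'SU] ZZ' in \<open>auto simp: carr mult\<close>)
  interpret NC: normal "grp_center ?G" ?G by (rule center_normal[OF grp])
  have hom: "(\<lambda>A. grp_center ?G #>\<^bsub>?G\<^esub> A) \<in> hom ?G (?G Mod grp_center ?G)"
    by (rule NC.r_coset_hom_Mod)
  have prod: "eta q Z \<otimes>\<^bsub>PSU q\<^esub> eta q Y = eta q (Z ** Y)"
    unfolding PSU_def eta_def
    using hom_mult[OF hom, of Z Y] ZSU YSU by (simp add: carr mult)
  define N where "N = Z ** Y"
  have NSU: "N \<in> SU3 q" using monoid.m_closed[OF group.is_monoid[OF grp], of Z Y] ZSU YSU by (simp add: carr mult N_def)
  have Ne: "N$1$2 = 0" "N$2$1 = 0" "N$2$2 = 1" "N$2$3 = 0" "N$3$2 = 0"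
    unfolding N_def hZ Y' Y0_def by (simp_all add: matrix_matrix_mult_def sum_3)
  have N31: "N$3$1 = a + inverse a"
    unfolding N_def hZ Y' Y0_def by (simp add: matrix_matrix_mult_def sum_3)
  have Ntr: "N$1$1 + N$3$3 = a + inverse a"
    unfolding N_def hZ Y' Y0_def by (simp add: matrix_matrix_mult_def sum_3 algebra_simps C two)
  have Nd: "N$1$1 * N$3$3 - N$1$3 * N$3$1 = 1"
    unfolding N_def hZ Y' Y0_def
    apply (simp add: matrix_matrix_mult_def sum_3)
    apply (simp add: field_simps ha0)
    apply (simp add: algebra_simps C two)
    done
  define s where "s n = (a ^ n - inverse a ^ n) / (a - inverse a)" for n
  have s0: "s 0 = 0" by (simp add: s_def)
  have s1: "s 1 = 1" using ana by (simp add: s_def)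
  have sr: "s (n+2) = (N$1$1 + N$3$3) * s (n+1) - s n" for n
    unfolding s_def Ntr by (rule srec[OF aia])
  note PF = pow_form[OF Ne Nd s0 s1 sr]
  have sq1: "s (q + 1) = 0" unfolding s_def power_inverse apow by simp
  have sq: "s q = -1" unfolding s_def aq aiq using ana by (simp add: field_simps)
  have Nq: "mpow N (Suc q) = mat 1"
    unfolding PF sq1 sq by (simp add: mat_def vec_eq_iff forall_3)
  have ordN: "group.ord (PSU q) (eta q N) = q + 1"
    unfolding PSU_def eta_def
  proof (rule quot_ord_gen[OF grp])
    show "N \<in> carrier ?G" using NSU carr by simp
    show "N [^]\<^bsub>?G\<^esub> (q + 1) \<in> grp_center ?G" unfolding SU_pow using Nq onec by simp
    fix n :: nat
    assume nc: "N [^]\<^bsub>?G\<^esub> n \<in> grp_center ?G"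
    show "(q + 1) dvd n"
    proof (cases n)
      case 0
      then show ?thesis by simp
    next
      case (Suc m)
      have "mpow N (Suc m) \<in> grp_center ?G" using nc Suc unfolding SU_pow by simp
      then have "mpow N (Suc m) ** Z = Z ** mpow N (Suc m)"
        using cen[OF _ ZSU] by simp
      then have "(mpow N (Suc m) ** Z)$3$3 = (Z ** mpow N (Suc m))$3$3" by simp
      then have "s (m+1) * N$3$1 = 0" unfolding PF hZ
        by (simp add: matrix_matrix_mult_def sum_3)
      then have "s (m+1) = 0" using apa N31 by simp
      then have "a ^ (m+1) = inverse a ^ (m+1)" using ana by (simp add: s_def)
      then have h: "a ^ (m+1) = inverse (a ^ (m+1))" unfolding power_inverse .
      have "a ^ (m+1) \<noteq> 0" using ha0 by simp
      then have "a ^ (m+1) * inverse (a ^ (m+1)) = 1" by (rule right_inverse)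
      then have "a ^ (m+1) * a ^ (m+1) = 1" by (subst (2) h)
      then have "a ^ (2 * (m+1)) = 1" by (simp only: mult_2 power_add)
      then have d: "(q + 1) dvd 2 * (m+1)" by (rule adiv)
      have "odd (q + 1)" using hq f2 by simp
      then have "coprime (q + 1) 2" by simp
      then have "(q + 1) dvd (m+1)" using d coprime_dvd_mult_right_iff[of "q+1" 2 "m+1"]
        by (simp add: mult.commute)
      then show ?thesis using Suc by simp
    qed
  qed
  show ?thesis using XSU YSU ZSU ordX ordY ordZ ordN prod N_def by simp
qed


end
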